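(* Let $n=|\mathcal A|=|\mathcal T|$ and $W=[w_{ij}]\in\mathbb{R}^{n\times n}$. Define $f(\alpha)=\sum_{i=1}^n f_i(\alpha_i)$ where $\alpha_i\in\mathbb{R}^n$ is the $i$-th row of $\alpha$, $f_i(\alpha_i)=-w_i^{\mathrm T}\alpha_i$ if $\mathbf 1^{\mathrm T}\alpha_i=1$ and $0\le\alpha_i\le 1$, and $f_i(\alpha_i)=+\infty$ otherwise ($w_i$ the $i$-th row of $W$); and let $g(z)=0$ if every column of $z$ sums to $1$ and $g(z)=+\infty$ otherwise. Consider $\min f(\alpha)+g(z)$ subject to $\alpha=z$. Fix $\rho>0$ and $\tau\in(0,1)$, initial $z^0,u^0\in\mathbb{R}^{n\times n}$, and iterate $$\alpha^{k+1}=\arg\min_\alpha f(\alpha)+\tfrac{\rho}{2}\|\alpha-z^k+u^k\|_F^2,$$ $$z^{k+1}=\arg\min_z g(z)+\tfrac{\rho}{2\tau}\big\|z-\big(z^k+\tau(\alpha^{k+1}-z^k+u^k)\big)\big\|_F^2,$$ $$u^{k+1}=u^k+\alpha^{k+1}-z^{k+1}.$$ Then $z^k$ converges to an optimal solution $z^\*$ of the problem (and $\alpha^k-z^k\to 0$).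
   Context: $\mathbf 1$ is the all-ones vector; inequalities between vectors are entrywise. The $z$-update is a single projected-gradient (linearized proximal) step on the augmented Lagrangian $\sum_i f_i(\alpha_i)+g(z)+\tfrac{\rho}{2}\|\alpha-z+u\|^2$ in place of the exact ADMM $z$-minimization; $u$ is the scaled dual variable. *)

theory Defs
  imports "HOL-Analysis.Analysis" "HOL-Library.Extended_Real"
begin

text \<open>Matrices in R^{n x n} are modelled as real^'n^'n ('n a finite index type, n = CARD('n)).
  Row i of x is x $ i, entry (i,j) is x $ i $ j. The norm on real^'n^'n is the Frobenius norm.\<close>

definition fi :: "real^'n \<Rightarrow> real^'n \<Rightarrow> ereal" where
  "fi wi ai = (if (\<Sum>j\<in>UNIV. ai $ j) = 1 \<and> (\<forall>j. 0 \<le> ai $ j \<and> ai $ j \<le> 1)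
               then ereal (- (wi \<bullet> ai)) else \<infinity>)"

definition fobj :: "real^'n^'n \<Rightarrow> real^'n^'n \<Rightarrow> ereal" where
  "fobj W a = (\<Sum>i\<in>UNIV. fi (W $ i) (a $ i))"

definition gobj :: "real^'n^'n \<Rightarrow> ereal" where
  "gobj z = (if (\<forall>j. (\<Sum>i\<in>UNIV. z $ i $ j) = 1) then 0 else \<infinity>)"

end

theory Submission
  imports Defs
begin
lemma step_ineq:
  fixes W a z z' u zs ys :: "'a::real_inner"
  assumes rho: "\<rho> > 0" and tau: "0 < \<tau>"
  and h1: "(- W + \<rho> *\<^sub>R (a - z + u)) \<bullet> (zs - a) \<ge> 0"
  and h2: "(z' - (z + \<tau> *\<^sub>R (a - z + u))) \<bullet> (zs - z') \<ge> 0"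
  and h3: "(ys - W) \<bullet> (a - zs) \<ge> 0"
  and h4: "ys \<bullet> (z' - zs) \<le> 0"
  shows "(norm (u + a - z' - (1/\<rho>) *\<^sub>R ys))\<^sup>2 / 2 + (norm (z' - zs))\<^sup>2 / (2*\<tau>)
         + (norm (a - z))\<^sup>2 / 2 + (1 - \<tau>) / (2*\<tau>) * (norm (z' - z))\<^sup>2
       \<le> (norm (u - (1/\<rho>) *\<^sub>R ys))\<^sup>2 / 2 + (norm (z - zs))\<^sup>2 / (2*\<tau>)"
proof -
  define us where "us = (1/\<rho>) *\<^sub>R ys"
  have ys: "ys = \<rho> *\<^sub>R us" using rho by (simp add: us_def)
  have e: "(norm (u - us))\<^sup>2 / 2 + (norm (z - zs))\<^sup>2 / (2*\<tau>)
     - ((norm (u + a - z' - us))\<^sup>2 / 2 + (norm (z' - zs))\<^sup>2 / (2*\<tau>)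
         + (norm (a - z))\<^sup>2 / 2 + (1 - \<tau>) / (2*\<tau>) * (norm (z' - z))\<^sup>2)
     = ((- W + \<rho> *\<^sub>R (a - z + u)) \<bullet> (zs - a) + (ys - W) \<bullet> (a - zs)
        + (\<rho>/\<tau>) * ((z' - (z + \<tau> *\<^sub>R (a - z + u))) \<bullet> (zs - z')) - ys \<bullet> (z' - zs)) / \<rho>"
    using rho tau unfolding ys
    by (simp add: power2_norm_eq_inner inner_simps field_simps inner_commute)
  have "0 \<le> ((- W + \<rho> *\<^sub>R (a - z + u)) \<bullet> (zs - a) + (ys - W) \<bullet> (a - zs)
        + (\<rho>/\<tau>) * ((z' - (z + \<tau> *\<^sub>R (a - z + u))) \<bullet> (zs - z')) - ys \<bullet> (z' - zs)) / \<rho>"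
  proof (rule divide_nonneg_pos[OF _ rho])
    have "0 \<le> (\<rho>/\<tau>) * ((z' - (z + \<tau> *\<^sub>R (a - z + u))) \<bullet> (zs - z'))"
      using h2 rho tau by simp
    then show "0 \<le> (- W + \<rho> *\<^sub>R (a - z + u)) \<bullet> (zs - a) + (ys - W) \<bullet> (a - zs)
        + (\<rho>/\<tau>) * ((z' - (z + \<tau> *\<^sub>R (a - z + u))) \<bullet> (zs - z')) - ys \<bullet> (z' - zs)"
      using h1 h3 h4 by linarith
  qed
  then show ?thesis using e by (simp add: us_def)
qed


lemma vi_of_min:
  fixes c x a v :: "'a::real_inner"
  assumes r: "r \<ge> 0"
  and min: "\<And>t. 0 < t \<Longrightarrow> t \<le> 1 \<Longrightarrow> c \<bullet> x + r/2 * (norm (x - v))\<^sup>2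
             \<le> c \<bullet> (x + t *\<^sub>R (a - x)) + r/2 * (norm (x + t *\<^sub>R (a - x) - v))\<^sup>2"
  shows "(c + r *\<^sub>R (x - v)) \<bullet> (a - x) \<ge> 0"
proof -
  define L where "L = (c + r *\<^sub>R (x - v)) \<bullet> (a - x)"
  define N where "N = (norm (a - x))\<^sup>2"
  have key: "- (r/2 * N) * t \<le> L" if "0 < t" "t \<le> 1" for t
  proof -
    have "c \<bullet> (x + t *\<^sub>R (a - x)) + r/2 * (norm (x + t *\<^sub>R (a - x) - v))\<^sup>2
        - (c \<bullet> x + r/2 * (norm (x - v))\<^sup>2) = t * L + r/2 * t^2 * N"
      unfolding L_def N_def power2_norm_eq_inner
      by (simp add: inner_simps field_simps inner_commute power2_eq_square)
    then have "0 \<le> t * L + r/2 * t^2 * N" using min[OF that] by linarith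
    then have "0 \<le> t * (L + r/2 * t * N)" by (simp add: algebra_simps power2_eq_square)
    then have "0 \<le> L + r/2 * t * N" using that by (simp add: zero_le_mult_iff)
    then show ?thesis by (simp add: algebra_simps)
  qed
  have lim: "((\<lambda>t. - (r/2 * N) * t) \<longlongrightarrow> - (r/2 * N) * 0) (at_right (0::real))"
    by (intro tendsto_intros)
  have ev: "\<forall>\<^sub>F t in at_right (0::real). - (r/2 * N) * t \<le> L"
    by (rule eventually_mono[OF eventually_at_right_real[of 0 1]]) (use key in auto)
  have "- (r/2 * N) * 0 \<le> L"
    by (rule tendsto_le[OF trivial_limit_at_right_real tendsto_const lim ev])
  then show ?thesis by (simp add: L_def)
qed

definition Fset :: "(real^'n^'n) set" where
  "Fset = {x. \<forall>i. (\<Sum>j\<in>UNIV. x $ i $ j) = 1 \<and> (\<forall>j. 0 \<le> x $ i $ j)}"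
definition Aset :: "(real^'n^'n) set" where
  "Aset = {x. \<forall>j. (\<Sum>i\<in>UNIV. x $ i $ j) = 1}"

lemma minner: "(x::real^'n^'m) \<bullet> y = (\<Sum>i\<in>UNIV. \<Sum>j\<in>UNIV. x$i$j * y$i$j)"
  by (simp add: inner_vec_def)

lemma row_le1:
  fixes a :: "real^'n"
  assumes "(\<Sum>j\<in>UNIV. a $ j) = 1" "\<forall>j. 0 \<le> a $ j"
  shows "a $ j \<le> 1"
proof -
  have "a $ j \<le> (\<Sum>j\<in>UNIV. a $ j)"
    using assms(2) by (intro member_le_sum) auto
  then show ?thesis using assms(1) by simp
qed

lemma fi_simp: "fi wi ai = (if (\<Sum>j\<in>UNIV. ai $ j) = 1 \<and> (\<forall>j. 0 \<le> ai $ j)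
               then ereal (- (wi \<bullet> ai)) else \<infinity>)"
  unfolding fi_def using row_le1 by auto

lemma fobj_F: "x \<in> Fset \<Longrightarrow> fobj W x = ereal (- (W \<bullet> x))"
proof -
  assume "x \<in> Fset"
  then have "fobj W x = (\<Sum>i\<in>UNIV. ereal (- (W $ i \<bullet> x $ i)))"
    unfolding fobj_def Fset_def by (intro sum.cong) (auto simp: fi_simp)
  also have "\<dots> = ereal (- (W \<bullet> x))"
    by (simp add: inner_vec_def sum_negf)
  finally show ?thesis .
qed

lemma fobj_notF: "x \<notin> Fset \<Longrightarrow> fobj W x = \<infinity>"
proof -
  assume "x \<notin> Fset"
  then obtain i where "\<not> ((\<Sum>j\<in>UNIV. x $ i $ j) = 1 \<and> (\<forall>j. 0 \<le> x $ i $ j))"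
    unfolding Fset_def by auto
  then have "fi (W $ i) (x $ i) = \<infinity>" by (simp add: fi_simp)
  then show ?thesis unfolding fobj_def by (simp add: sum_Pinfty) blast
qed

lemma gobj_A: "x \<in> Aset \<Longrightarrow> gobj x = 0"
  by (simp add: gobj_def Aset_def)
lemma gobj_notA: "x \<notin> Aset \<Longrightarrow> gobj x = \<infinity>"
  by (simp add: gobj_def Aset_def)

definition cmat :: "real^'n^'n" where "cmat = (\<chi> i j. 1 / real CARD('n))"

lemma cmat_FA: "cmat \<in> Fset" "cmat \<in> Aset"
  by (auto simp: cmat_def Fset_def Aset_def)


lemma Fset_conv: assumes "x \<in> Fset" "a \<in> Fset" "0 \<le> t" "t \<le> 1"
  shows "x + t *\<^sub>R (a - x) \<in> Fset"
proof -
  have "(\<Sum>j\<in>UNIV. (x + t *\<^sub>R (a - x)) $ i $ j) = 1" for i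
  proof -
    have "(\<Sum>j\<in>UNIV. (x + t *\<^sub>R (a - x)) $ i $ j) = (\<Sum>j\<in>UNIV. x$i$j) + t * ((\<Sum>j\<in>UNIV. a$i$j) - (\<Sum>j\<in>UNIV. x$i$j))"
      by (simp add: sum.distrib sum_subtractf flip: sum_distrib_left)
    then show ?thesis using assms(1,2) unfolding Fset_def by simp
  qed
  moreover have "0 \<le> (x + t *\<^sub>R (a - x)) $ i $ j" for i j
  proof -
    have "(x + t *\<^sub>R (a - x)) $ i $ j = (1 - t) * x$i$j + t * a$i$j" by (simp add: algebra_simps)
    moreover have "0 \<le> x$i$j" "0 \<le> a$i$j" using assms(1,2) unfolding Fset_def by auto
    ultimately show ?thesis using assms(3,4) by simp
  qed
  ultimately show ?thesis unfolding Fset_def by blast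
qed

lemma Aset_conv: assumes "x \<in> Aset" "a \<in> Aset"
  shows "x + t *\<^sub>R (a - x) \<in> Aset"
proof -
  have "(\<Sum>i\<in>UNIV. (x + t *\<^sub>R (a - x)) $ i $ j) = 1" for j
  proof -
    have "(\<Sum>i\<in>UNIV. (x + t *\<^sub>R (a - x)) $ i $ j) = (\<Sum>i\<in>UNIV. x$i$j) + t * ((\<Sum>i\<in>UNIV. a$i$j) - (\<Sum>i\<in>UNIV. x$i$j))"
      by (simp add: sum.distrib sum_subtractf flip: sum_distrib_left)
    then show ?thesis using assms(1,2) unfolding Aset_def by simp
  qed
  then show ?thesis unfolding Aset_def by blast
qed


lemma ifmul: "(if P then 1 else 0) * (x::real) = (if P then x else 0)" by simp

lemma sumif: "(\<Sum>j\<in>A. if P then f j else 0) = (if P then sum f A else (0::real))" by simp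

definition KKT :: "real^'n^'n \<Rightarrow> real^'n^'n \<Rightarrow> real^'n^'n \<Rightarrow> bool" where
  "KKT W zs ys \<longleftrightarrow> zs \<in> Fset \<and> zs \<in> Aset \<and> (\<forall>a\<in>Fset. (ys - W) \<bullet> (a - zs) \<ge> 0)
     \<and> (\<forall>b\<in>Aset. ys \<bullet> (b - zs) \<le> 0)"

lemma closed_FA: "closed (Fset \<inter> Aset)"
  unfolding Fset_def Aset_def
  by (intro closed_Int closed_Collect_all closed_Collect_conj closed_Collect_eq closed_Collect_le
      continuous_intros)

lemma bounded_FA: "bounded (Fset :: (real^'n^'n) set)"
proof -
  have "norm x \<le> real CARD('n)" if "x \<in> Fset" for x :: "real^'n^'n"
  proof -
    have r: "norm (x $ i) \<le> 1" for i
    proof -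
      have "norm (x $ i) \<le> (\<Sum>j\<in>UNIV. \<bar>x $ i $ j\<bar>)" by (rule norm_le_l1_cart)
      also have "\<dots> = (\<Sum>j\<in>UNIV. x $ i $ j)" using that unfolding Fset_def by auto
      also have "\<dots> = 1" using that unfolding Fset_def by auto
      finally show ?thesis .
    qed
    have "norm x \<le> (\<Sum>i\<in>UNIV. norm (x $ i))"
      unfolding norm_vec_def by (rule L2_set_le_sum) auto
    also have "\<dots> \<le> (\<Sum>i\<in>(UNIV::'n set). 1)" by (rule sum_mono) (use r in auto)
    finally show ?thesis by simp
  qed
  then show ?thesis unfolding bounded_iff by blast
qed

lemma kkt_exists: "\<exists>zs ys. KKT W zs (ys :: real^'n^'n)"
proof -
  define P where "P = Fset \<inter> (Aset :: (real^'n^'n) set)"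
  have cP: "compact P" unfolding P_def
    using closed_FA bounded_FA bounded_subset by (metis bounded_closed_imp_seq_compact inf_le1 seq_compact_eq_compact)
  have neP: "P \<noteq> {}" using cmat_FA P_def by blast
  have "continuous_on P (\<lambda>x. W \<bullet> x)" by (intro continuous_intros)
  from continuous_attains_sup[OF cP neP this]
  obtain zs where zsP: "zs \<in> P" and zmax: "\<And>y. y \<in> P \<Longrightarrow> W \<bullet> y \<le> W \<bullet> zs" by blast
  have zF: "zs \<in> Fset" and zA: "zs \<in> Aset" using zsP P_def by auto
  define E :: "'n \<Rightarrow> real^'n^'n" where "E i = (\<chi> r c. if r = i then 1 else 0)" for i
  define C :: "'n \<Rightarrow> real^'n^'n" where "C j = (\<chi> r c. if c = j then 1 else 0)" for j
  define e :: "'n \<Rightarrow> 'n \<Rightarrow> real^'n^'n" where "e i j = (\<chi> r c. if r = i then (if c = j then 1 else 0) else 0)" for i j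
  have Ed: "E i \<bullet> d = (\<Sum>c\<in>UNIV. d $ i $ c)" for i d
    unfolding E_def minner by (simp add: ifmul sumif cong: if_cong)
  have Cd: "C j \<bullet> d = (\<Sum>r\<in>UNIV. d $ r $ j)" for j d
    unfolding C_def minner by (simp add: ifmul sumif cong: if_cong)
  have ed: "e i j \<bullet> d = d $ i $ j" for i j d
    unfolding e_def minner by (simp add: ifmul sumif if_distrib[of "\<lambda>x. x * _"] cong: if_cong)
  define G where "G = range E \<union> range (\<lambda>i. - E i) \<union> range C \<union> range (\<lambda>j. - C j)
      \<union> (\<lambda>p. - e (fst p) (snd p)) ` {p. zs $ fst p $ snd p = 0}"
  have finG: "finite G" unfolding G_def by auto
  define K where "K = convex_cone hull G"
  have clK: "closed K" unfolding K_def by (rule closed_convex_cone_hull[OF finG])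
  have cvK: "convex K" unfolding K_def by (rule convex_convex_cone_hull)
  have GK: "G \<subseteq> K" unfolding K_def by (rule hull_subset)
  have WK: "W \<in> K"
  proof (rule ccontr)
    assume "W \<notin> K"
    from separating_hyperplane_closed_point[OF cvK clK this]
    obtain a b where ab: "a \<bullet> W < b" "\<And>x. x \<in> K \<Longrightarrow> b < a \<bullet> x" by blast
    have b0: "b < 0" using ab(2)[of 0] convex_cone_hull_contains_0 K_def by auto
    have ag: "a \<bullet> g \<ge> 0" if "g \<in> G" for g
    proof (rule ccontr)
      assume "\<not> 0 \<le> a \<bullet> g"
      then have neg: "a \<bullet> g < 0" by simp
      define c where "c = b / (a \<bullet> g)"
      have c0: "0 \<le> c" using neg b0 by (simp add: c_def divide_nonpos_neg)
      have "c *\<^sub>R g \<in> K" using convex_cone_hull_mul[of g G c] GK that c0 K_def by auto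
      then have "b < a \<bullet> (c *\<^sub>R g)" by (rule ab(2))
      also have "\<dots> = b" using neg by (simp add: c_def)
      finally show False by simp
    qed
    define d where "d = - a"
    have dW: "W \<bullet> d > 0" using ab(1) b0 by (simp add: d_def inner_commute)
    have row: "(\<Sum>c\<in>UNIV. d $ i $ c) = 0" for i
    proof -
      have "E i \<in> G" "- E i \<in> G" unfolding G_def by auto
      then have "a \<bullet> E i \<ge> 0" "a \<bullet> (- E i) \<ge> 0" using ag by blast+
      then show ?thesis using Ed[of i d] by (simp add: d_def inner_commute)
    qed
    have col: "(\<Sum>r\<in>UNIV. d $ r $ j) = 0" for j
    proof -
      have "C j \<in> G" "- C j \<in> G" unfolding G_def by auto
      then have "a \<bullet> C j \<ge> 0" "a \<bullet> (- C j) \<ge> 0" using ag by blast+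
      then show ?thesis using Cd[of j d] by (simp add: d_def inner_commute)
    qed
    have act: "d $ i $ j \<ge> 0" if "zs $ i $ j = 0" for i j
    proof -
      have "- e i j \<in> G" using that unfolding G_def by (auto intro!: image_eqI[of _ _ "(i,j)"])
      then have "a \<bullet> (- e i j) \<ge> 0" using ag by blast
      then show ?thesis using ed[of i j d] by (simp add: d_def inner_commute)
    qed
    have evij: "\<forall>\<^sub>F t in at_right (0::real). 0 \<le> zs $ i $ j + t * d $ i $ j" for i j
    proof (cases "zs $ i $ j = 0")
      case True
      show ?thesis
        by (rule eventually_mono[OF eventually_at_right_less]) (use act[OF True] True in auto)
    next
      case False
      have "0 \<le> zs $ i $ j" using zF unfolding Fset_def by blast
      then have pos: "zs $ i $ j > 0" using False by linarith
      have "((\<lambda>t. zs $ i $ j + t * d $ i $ j) \<longlongrightarrow> zs $ i $ j + 0 * d $ i $ j) (at_right 0)"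
        by (intro tendsto_intros)
      then have "\<forall>\<^sub>F t in at_right 0. 0 < zs $ i $ j + t * d $ i $ j"
        using pos by (intro order_tendstoD(1)) auto
      then show ?thesis by (rule eventually_mono) auto
    qed
    have "\<forall>\<^sub>F t in at_right (0::real). 0 < t \<and> (\<forall>i j. 0 \<le> zs $ i $ j + t * d $ i $ j)"
      using eventually_at_right_less evij
      by (intro eventually_conj eventually_all_finite) auto
    then obtain t :: real where t: "0 < t" "\<And>i j. 0 \<le> zs $ i $ j + t * d $ i $ j"
      using eventually_happens'[OF trivial_limit_at_right_real] by blast
    define y where "y = zs + t *\<^sub>R d"
    have "y \<in> Fset"
      using zF t(2) row unfolding Fset_def y_def by (simp add: sum.distrib flip: sum_distrib_left)
    moreover have "y \<in> Aset"
      using zA col unfolding Aset_def y_def by (simp add: sum.distrib flip: sum_distrib_left)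
    ultimately have "W \<bullet> y \<le> W \<bullet> zs" using zmax P_def by blast
    moreover have "W \<bullet> y = W \<bullet> zs + t * (W \<bullet> d)" by (simp add: y_def inner_simps)
    ultimately show False using mult_pos_pos[OF t(1) dW] by linarith
  qed
  define Q where "Q = {x :: real^'n^'n. \<exists>l m :: real^'n. \<exists>v :: real^'n^'n. (\<forall>i j. 0 \<le> v$i$j)
       \<and> (\<forall>i j. zs$i$j * v$i$j = 0) \<and> (\<forall>i j. x$i$j = l$i + m$j - v$i$j)}"
  have GQ: "G \<subseteq> Q"
  proof -
    have "E i \<in> Q" for i unfolding Q_def E_def
      by (rule CollectI, rule exI[of _ "\<chi> r. if r = i then 1 else 0"], rule exI[of _ 0], rule exI[of _ 0]) simp
    moreover have "- E i \<in> Q" for i unfolding Q_def E_def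
      by (rule CollectI, rule exI[of _ "\<chi> r. if r = i then -1 else 0"], rule exI[of _ 0], rule exI[of _ 0]) simp
    moreover have "C i \<in> Q" for i unfolding Q_def C_def
      by (rule CollectI, rule exI[of _ 0], rule exI[of _ "\<chi> r. if r = i then 1 else 0"], rule exI[of _ 0]) simp
    moreover have "- C i \<in> Q" for i unfolding Q_def C_def
      by (rule CollectI, rule exI[of _ 0], rule exI[of _ "\<chi> r. if r = i then -1 else 0"], rule exI[of _ 0]) simp
    moreover have "- e i j \<in> Q" if "zs $ i $ j = 0" for i j unfolding Q_def e_def
      by (rule CollectI, rule exI[of _ 0], rule exI[of _ 0], rule exI[of _ "e i j"]) (auto simp: e_def that)
    ultimately show ?thesis unfolding G_def by auto
  qed
  have ccQ: "convex_cone Q"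
  proof -
    have Q0: "0 \<in> Q" unfolding Q_def
      by (rule CollectI, rule exI[of _ 0], rule exI[of _ 0], rule exI[of _ 0]) simp
    have Qadd: "x + y \<in> Q" if xQ: "x \<in> Q" "y \<in> Q" for x y
    proof -
      obtain l m v where 1: "\<forall>i j. 0 \<le> v$i$j" "\<forall>i j. zs$i$j * v$i$j = 0" "\<forall>i j. x$i$j = l$i + m$j - v$i$j"
        using xQ(1) unfolding Q_def by blast
      obtain l' m' v' where 2: "\<forall>i j. 0 \<le> v'$i$j" "\<forall>i j. zs$i$j * v'$i$j = 0" "\<forall>i j. y$i$j = l'$i + m'$j - v'$i$j"
        using xQ(2) unfolding Q_def by blast
      show ?thesis unfolding Q_def
        by (rule CollectI, rule exI[of _ "l + l'"], rule exI[of _ "m + m'"], rule exI[of _ "v + v'"])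
           (simp add: distrib_left 1 2)
    qed
    have Qmul: "c *\<^sub>R x \<in> Q" if xQ: "x \<in> Q" "0 \<le> c" for x c
    proof -
      obtain l m v where 1: "\<forall>i j. 0 \<le> v$i$j" "\<forall>i j. zs$i$j * v$i$j = 0" "\<forall>i j. x$i$j = l$i + m$j - v$i$j"
        using xQ(1) unfolding Q_def by blast
      have w1: "\<forall>i j. 0 \<le> (c *\<^sub>R v)$i$j" using 1(1) xQ(2) by simp
      have w2: "\<forall>i j. zs$i$j * (c *\<^sub>R v)$i$j = 0"
      proof (intro allI)
        fix i j
        have z0: "zs$i$j * v$i$j = 0" using 1(2) by blast
        have "zs$i$j * (c *\<^sub>R v)$i$j = c * (zs$i$j * v$i$j)" by (simp add: ac_simps)
        then show "zs$i$j * (c *\<^sub>R v)$i$j = 0" unfolding z0 by simp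
      qed
      have w3: "\<forall>i j. (c *\<^sub>R x)$i$j = (c *\<^sub>R l)$i + (c *\<^sub>R m)$j - (c *\<^sub>R v)$i$j"
        by (simp add: 1(3) algebra_simps)
      show ?thesis unfolding Q_def using w1 w2 w3 by blast
    qed
    have "conic Q" unfolding conic_def using Qmul by blast
    moreover have "convex Q" unfolding convex_def using Qadd Qmul by blast
    ultimately show ?thesis unfolding convex_cone_def using Q0 by blast
  qed
  have "W \<in> Q" using WK hull_minimal[OF GQ, of convex_cone] ccQ K_def by blast
  then obtain l m v where lmv: "\<And>i j. 0 \<le> v$i$j" "\<And>i j. zs$i$j * v$i$j = 0"
      "\<And>i j. W$i$j = l$i + m$j - v$i$j"
    unfolding Q_def by blast
  define ys :: "real^'n^'n" where "ys = (\<chi> i j. m $ j)"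
  have K1: "(ys - W) \<bullet> (a - zs) \<ge> 0" if "a \<in> Fset" for a
  proof -
    have t: "(ys - W)$i$j * (a - zs)$i$j = v$i$j * a$i$j + l$i * (zs$i$j - a$i$j)" for i j
    proof -
      have "(ys - W)$i$j * (a - zs)$i$j = (v$i$j - l$i) * (a$i$j - zs$i$j)"
        by (simp add: ys_def lmv(3))
      also have "\<dots> = v$i$j * a$i$j + l$i * (zs$i$j - a$i$j) - zs$i$j * v$i$j"
        by (simp add: algebra_simps)
      also have "\<dots> = v$i$j * a$i$j + l$i * (zs$i$j - a$i$j)" unfolding lmv(2) by simp
      finally show ?thesis .
    qed
    have "(ys - W) \<bullet> (a - zs) = (\<Sum>i\<in>UNIV. (\<Sum>j\<in>UNIV. v$i$j * a$i$j) + l$i * ((\<Sum>j\<in>UNIV. zs$i$j) - (\<Sum>j\<in>UNIV. a$i$j)))"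
      unfolding minner t by (simp add: sum.distrib sum_subtractf[symmetric] sum_distrib_left right_diff_distrib)
    also have "\<dots> = (\<Sum>i\<in>UNIV. (\<Sum>j\<in>UNIV. v$i$j * a$i$j))"
      using zF that unfolding Fset_def by simp
    also have "\<dots> \<ge> 0" using that lmv(1) unfolding Fset_def by (intro sum_nonneg) auto
    finally show ?thesis .
  qed
  have K2: "ys \<bullet> (b - zs) \<le> 0" if "b \<in> Aset" for b
  proof -
    have "ys \<bullet> (b - zs) = (\<Sum>j\<in>UNIV. \<Sum>i\<in>UNIV. m$j * (b$i$j - zs$i$j))"
      unfolding minner ys_def by (subst sum.swap) simp
    also have "\<dots> = (\<Sum>j\<in>UNIV. m$j * ((\<Sum>i\<in>UNIV. b$i$j) - (\<Sum>i\<in>UNIV. zs$i$j)))"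
      by (simp add: sum_subtractf[symmetric] sum_distrib_left right_diff_distrib)
    also have "\<dots> = 0" using zA that unfolding Aset_def by simp
    finally show ?thesis by simp
  qed
  show ?thesis unfolding KKT_def using zF zA K1 K2 by blast
qed


lemma sqlim:
  fixes f :: "nat \<Rightarrow> 'a::real_normed_vector"
  assumes c: "c \<ge> 0" and le: "\<And>k. (norm (f k))\<^sup>2 \<le> c * g k" and g: "g \<longlonglongrightarrow> 0"
  shows "f \<longlonglongrightarrow> 0"
proof (rule Lim_null_comparison)
  show "\<forall>\<^sub>F k in sequentially. norm (f k) \<le> sqrt (c * g k)"
  proof (intro always_eventually allI)
    fix k
    have "norm (f k) = sqrt ((norm (f k))\<^sup>2)" by simp
    also have "\<dots> \<le> sqrt (c * g k)" using le[of k] by (rule real_sqrt_le_mono)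
    finally show "norm (f k) \<le> sqrt (c * g k)" .
  qed
  have "(\<lambda>k. sqrt (c * g k)) \<longlonglongrightarrow> sqrt (c * 0)" by (intro tendsto_intros g)
  then show "(\<lambda>k. sqrt (c * g k)) \<longlonglongrightarrow> 0" by simp
qed

lemma le_1_sq: "(x::real) \<le> 1 + x\<^sup>2"
proof -
  have "0 \<le> (x - 1/2)\<^sup>2" by simp
  also have "\<dots> = x\<^sup>2 - x + 1/4" by (simp add: power2_eq_square algebra_simps)
  finally show ?thesis by linarith
qed

theorem mainTheorem5:
  fixes W :: "real^'n^'n" and \<rho> \<tau> :: real
    and \<alpha> z u :: "nat \<Rightarrow> real^'n^'n"
  assumes rho: "\<rho> > 0"
    and tau: "0 < \<tau>" "\<tau> < 1"
    and alpha_step: "\<And>k a. fobj W (\<alpha> (Suc k)) + ereal (\<rho> / 2 * (norm (\<alpha> (Suc k) - z k + u k))\<^sup>2)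
                        \<le> fobj W a + ereal (\<rho> / 2 * (norm (a - z k + u k))\<^sup>2)"
    and z_step: "\<And>k b. gobj (z (Suc k)) + ereal (\<rho> / (2 * \<tau>) *
                         (norm (z (Suc k) - (z k + \<tau> *\<^sub>R (\<alpha> (Suc k) - z k + u k))))\<^sup>2)
                    \<le> gobj b + ereal (\<rho> / (2 * \<tau>) *
                         (norm (b - (z k + \<tau> *\<^sub>R (\<alpha> (Suc k) - z k + u k))))\<^sup>2)"
    and u_step: "\<And>k. u (Suc k) = u k + \<alpha> (Suc k) - z (Suc k)"
  shows "\<exists>zs. z \<longlonglongrightarrow> zs
            \<and> (\<forall>a b. a = b \<longrightarrow> fobj W zs + gobj zs \<le> fobj W a + gobj b)
            \<and> (\<lambda>k. \<alpha> k - z k) \<longlonglongrightarrow> 0"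
proof -
  have aF: "\<alpha> (Suc k) \<in> Fset" for k
  proof (rule ccontr)
    assume "\<alpha> (Suc k) \<notin> Fset"
    then have "fobj W (\<alpha> (Suc k)) = \<infinity>" by (rule fobj_notF)
    then show False using alpha_step[of k cmat] by (simp add: fobj_F cmat_FA)
  qed
  have zA: "z (Suc k) \<in> Aset" for k
  proof (rule ccontr)
    assume "z (Suc k) \<notin> Aset"
    then have "gobj (z (Suc k)) = \<infinity>" by (rule gobj_notA)
    then show False using z_step[of k cmat] by (simp add: gobj_A cmat_FA)
  qed
  have aVI: "(- W + \<rho> *\<^sub>R (\<alpha> (Suc k) - z k + u k)) \<bullet> (a - \<alpha> (Suc k)) \<ge> 0" if aF': "a \<in> Fset" for k a
  proof -
    define v where "v = z k - u k"
    have vv: "y - v = y - z k + u k" for y by (simp add: v_def algebra_simps)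
    have "((- W) + \<rho> *\<^sub>R (\<alpha> (Suc k) - v)) \<bullet> (a - \<alpha> (Suc k)) \<ge> 0"
    proof (rule vi_of_min)
      show "0 \<le> \<rho>" using rho by simp
      fix t :: real assume t: "0 < t" "t \<le> 1"
      define y where "y = \<alpha> (Suc k) + t *\<^sub>R (a - \<alpha> (Suc k))"
      have yF: "y \<in> Fset" unfolding y_def using Fset_conv[OF aF aF'] t by simp
      have "ereal (- (W \<bullet> \<alpha> (Suc k))) + ereal (\<rho> / 2 * (norm (\<alpha> (Suc k) - z k + u k))\<^sup>2)
          \<le> ereal (- (W \<bullet> y)) + ereal (\<rho> / 2 * (norm (y - z k + u k))\<^sup>2)"
        using alpha_step[of k y] by (simp add: fobj_F aF yF)
      then show "- W \<bullet> \<alpha> (Suc k) + \<rho> / 2 * (norm (\<alpha> (Suc k) - v))\<^sup>2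
           \<le> - W \<bullet> (\<alpha> (Suc k) + t *\<^sub>R (a - \<alpha> (Suc k))) + \<rho> / 2 * (norm (\<alpha> (Suc k) + t *\<^sub>R (a - \<alpha> (Suc k)) - v))\<^sup>2"
        unfolding vv y_def[symmetric] by simp
    qed
    then show ?thesis unfolding vv by simp
  qed
  have zVI: "(z (Suc k) - (z k + \<tau> *\<^sub>R (\<alpha> (Suc k) - z k + u k))) \<bullet> (b - z (Suc k)) \<ge> 0" if bA: "b \<in> Aset" for k b
  proof -
    define v where "v = z k + \<tau> *\<^sub>R (\<alpha> (Suc k) - z k + u k)"
    have "(0 + (\<rho>/\<tau>) *\<^sub>R (z (Suc k) - v)) \<bullet> (b - z (Suc k)) \<ge> 0"
    proof (rule vi_of_min)
      show "0 \<le> \<rho>/\<tau>" using rho tau by simp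
      fix t :: real assume t: "0 < t" "t \<le> 1"
      define y where "y = z (Suc k) + t *\<^sub>R (b - z (Suc k))"
      have yA: "y \<in> Aset" unfolding y_def using Aset_conv[OF zA bA] by simp
      have "ereal (\<rho> / (2 * \<tau>) * (norm (z (Suc k) - v))\<^sup>2) \<le> ereal (\<rho> / (2 * \<tau>) * (norm (y - v))\<^sup>2)"
        using z_step[of k y] by (simp add: gobj_A zA yA v_def)
      then show "0 \<bullet> z (Suc k) + \<rho> / \<tau> / 2 * (norm (z (Suc k) - v))\<^sup>2
          \<le> 0 \<bullet> (z (Suc k) + t *\<^sub>R (b - z (Suc k))) + \<rho> / \<tau> / 2 * (norm (z (Suc k) + t *\<^sub>R (b - z (Suc k)) - v))\<^sup>2"
        unfolding y_def[symmetric] by (simp add: field_simps)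
    qed
    then have "(\<rho>/\<tau>) * ((z (Suc k) - v) \<bullet> (b - z (Suc k))) \<ge> 0" by simp
    then show ?thesis using rho tau unfolding v_def by (simp add: zero_le_mult_iff zero_le_divide_iff)
  qed
  define \<Phi> where "\<Phi> zs ys k = (norm (u k - (1/\<rho>) *\<^sub>R ys))\<^sup>2 / 2 + (norm (z k - zs))\<^sup>2 / (2*\<tau>)"
    for zs ys :: "real^'n^'n" and k
  define D where "D k = (norm (\<alpha> (Suc k) - z k))\<^sup>2 / 2 + (1 - \<tau>) / (2*\<tau>) * (norm (z (Suc k) - z k))\<^sup>2" for k
  have D0: "D k \<ge> 0" for k unfolding D_def using tau by (intro add_nonneg_nonneg mult_nonneg_nonneg) auto
  have Phi0: "\<Phi> zs ys k \<ge> 0" for zs ys k unfolding \<Phi>_def using tau by (intro add_nonneg_nonneg divide_nonneg_pos) auto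
  have fej: "\<Phi> zs ys (Suc k) + D k \<le> \<Phi> zs ys k" if kkt: "KKT W zs ys" for zs ys k
  proof -
    have k: "zs \<in> Fset" "zs \<in> Aset" "(ys - W) \<bullet> (\<alpha> (Suc k) - zs) \<ge> 0" "ys \<bullet> (z (Suc k) - zs) \<le> 0"
      using kkt aF zA unfolding KKT_def by auto
    have "(norm (u k + \<alpha> (Suc k) - z (Suc k) - (1/\<rho>) *\<^sub>R ys))\<^sup>2 / 2 + (norm (z (Suc k) - zs))\<^sup>2 / (2*\<tau>)
         + (norm (\<alpha> (Suc k) - z k))\<^sup>2 / 2 + (1 - \<tau>) / (2*\<tau>) * (norm (z (Suc k) - z k))\<^sup>2
       \<le> (norm (u k - (1/\<rho>) *\<^sub>R ys))\<^sup>2 / 2 + (norm (z k - zs))\<^sup>2 / (2*\<tau>)"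
      by (rule step_ineq[OF rho tau(1) aVI[OF k(1)] zVI[OF k(2)] k(3) k(4)])
    then show ?thesis unfolding \<Phi>_def D_def u_step by simp
  qed
  have dec: "\<Phi> zs ys (Suc k) \<le> \<Phi> zs ys k" if "KKT W zs ys" for zs ys k
    using fej[OF that, of k] D0[of k] by linarith
  have decm: "\<Phi> zs ys k \<le> \<Phi> zs ys m" if "KKT W zs ys" "m \<le> k" for zs ys k m
    using that(2)
  proof (induction k rule: dec_induct)
    case base then show ?case by simp
  next
    case (step n) then show ?case using dec[OF that(1), of n] by linarith
  qed
  obtain zs0 ys0 where k0: "KKT W zs0 ys0" using kkt_exists by blast
  have sumD: "summable D"
  proof (rule summableI_nonneg_bounded[OF D0])
    fix n
    have "(\<Sum>i<n. D i) \<le> (\<Sum>i<n. \<Phi> zs0 ys0 i - \<Phi> zs0 ys0 (Suc i))"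
    proof (rule sum_mono)
      fix i show "D i \<le> \<Phi> zs0 ys0 i - \<Phi> zs0 ys0 (Suc i)" using fej[OF k0, of i] by linarith
    qed
    also have "\<dots> = \<Phi> zs0 ys0 0 - \<Phi> zs0 ys0 n" by (rule sum_lessThan_telescope')
    also have "\<dots> \<le> \<Phi> zs0 ys0 0" using Phi0 by simp
    finally show "(\<Sum>i<n. D i) \<le> \<Phi> zs0 ys0 0" .
  qed
  have D_lim: "D \<longlonglongrightarrow> 0" by (rule summable_LIMSEQ_zero[OF sumD])
  have l1: "(\<lambda>k. \<alpha> (Suc k) - z k) \<longlonglongrightarrow> 0"
  proof (rule sqlim[of 2 _ D, OF _ _ D_lim])
    show "(norm (\<alpha> (Suc k) - z k))\<^sup>2 \<le> 2 * D k" for k unfolding D_def using tau by simp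
  qed simp
  have l2: "(\<lambda>k. z (Suc k) - z k) \<longlonglongrightarrow> 0"
  proof (rule sqlim[of "2*\<tau>/(1-\<tau>)" _ D, OF _ _ D_lim])
    show "0 \<le> 2*\<tau>/(1-\<tau>)" using tau by simp
    fix k
    have "(1 - \<tau>) / (2*\<tau>) * (norm (z (Suc k) - z k))\<^sup>2 \<le> D k" unfolding D_def by simp
    then show "(norm (z (Suc k) - z k))\<^sup>2 \<le> 2*\<tau>/(1-\<tau>) * D k" using tau
      by (simp add: field_simps)
  qed
  have l3: "(\<lambda>k. \<alpha> (Suc k) - z (Suc k)) \<longlonglongrightarrow> 0"
  proof -
    have "(\<lambda>k. (\<alpha> (Suc k) - z k) - (z (Suc k) - z k)) \<longlonglongrightarrow> 0 - 0" by (intro tendsto_intros l1 l2)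
    then show ?thesis by simp
  qed
  have l4: "(\<lambda>k. \<alpha> k - z k) \<longlonglongrightarrow> 0" using LIMSEQ_imp_Suc[OF l3] .
  have bz: "norm (z k) \<le> norm zs0 + 1 + 2*\<tau> * \<Phi> zs0 ys0 0" for k
  proof -
    have "(norm (z k - zs0))\<^sup>2 \<le> 2*\<tau> * \<Phi> zs0 ys0 k" unfolding \<Phi>_def using tau by (simp add: field_simps)
    also have "\<dots> \<le> 2*\<tau> * \<Phi> zs0 ys0 0" using decm[OF k0, of 0 k] tau by simp
    finally have "norm (z k - zs0) \<le> 1 + 2*\<tau> * \<Phi> zs0 ys0 0" using le_1_sq[of "norm (z k - zs0)"] by linarith
    then show ?thesis using norm_triangle_sub[of "z k" zs0] by linarith
  qed
  have bu: "norm (u k) \<le> norm ((1/\<rho>) *\<^sub>R ys0) + 1 + 2 * \<Phi> zs0 ys0 0" for k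
  proof -
    have "(norm (u k - (1/\<rho>) *\<^sub>R ys0))\<^sup>2 \<le> 2 * \<Phi> zs0 ys0 k" unfolding \<Phi>_def using tau by (simp add: field_simps)
    also have "\<dots> \<le> 2 * \<Phi> zs0 ys0 0" using decm[OF k0, of 0 k] by simp
    finally have "norm (u k - (1/\<rho>) *\<^sub>R ys0) \<le> 1 + 2 * \<Phi> zs0 ys0 0" using le_1_sq[of "norm (u k - (1/\<rho>) *\<^sub>R ys0)"] by linarith
    then show ?thesis using norm_triangle_sub[of "u k" "(1/\<rho>) *\<^sub>R ys0"] by linarith
  qed
  define f where "f k = (z (Suc k), u (Suc k))" for k
  have "bounded (range f)"
  proof (rule bounded_subset)
    show "bounded (range z \<times> range u)"
      by (intro bounded_Times) (use bz bu in \<open>auto simp: bounded_iff\<close>)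
    show "range f \<subseteq> range z \<times> range u" unfolding f_def by auto
  qed
  then obtain l r where r: "strict_mono r" and fl: "(f \<circ> r) \<longlonglongrightarrow> l"
    using bounded_imp_convergent_subsequence by blast
  define zh where "zh = fst l"
  define uh where "uh = snd l"
  have zr: "(\<lambda>m. z (Suc (r m))) \<longlonglongrightarrow> zh"
    using tendsto_fst[OF fl] unfolding zh_def f_def comp_def by simp
  have ur: "(\<lambda>m. u (Suc (r m))) \<longlonglongrightarrow> uh"
    using tendsto_snd[OF fl] unfolding uh_def f_def comp_def by simp
  have l2r: "(\<lambda>m. z (Suc (r m)) - z (r m)) \<longlonglongrightarrow> 0"
    using LIMSEQ_subseq_LIMSEQ[OF l2 r] by (simp add: comp_def)
  have ar: "(\<lambda>m. \<alpha> (Suc (r m))) \<longlonglongrightarrow> zh"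
  proof -
    have "(\<lambda>m. \<alpha> (Suc (r m)) - z (Suc (r m))) \<longlonglongrightarrow> 0"
      using LIMSEQ_subseq_LIMSEQ[OF l3 r] by (simp add: comp_def)
    from tendsto_add[OF this zr] show ?thesis by simp
  qed
  have zhA: "zh \<in> Aset"
  proof -
    have "(\<Sum>i\<in>UNIV. zh $ i $ j) = 1" for j
    proof -
      have "(\<lambda>m. \<Sum>i\<in>UNIV. z (Suc (r m)) $ i $ j) \<longlonglongrightarrow> (\<Sum>i\<in>UNIV. zh $ i $ j)"
        by (intro tendsto_intros zr)
      moreover have "(\<lambda>m. \<Sum>i\<in>UNIV. z (Suc (r m)) $ i $ j) = (\<lambda>m. 1)"
        using zA unfolding Aset_def by auto
      ultimately show ?thesis using LIMSEQ_unique tendsto_const by metis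
    qed
    then show ?thesis unfolding Aset_def by blast
  qed
  have zhF: "zh \<in> Fset"
  proof -
    have "(\<Sum>j\<in>UNIV. zh $ i $ j) = 1" for i
    proof -
      have "(\<lambda>m. \<Sum>j\<in>UNIV. \<alpha> (Suc (r m)) $ i $ j) \<longlonglongrightarrow> (\<Sum>j\<in>UNIV. zh $ i $ j)"
        by (intro tendsto_intros ar)
      moreover have "(\<lambda>m. \<Sum>j\<in>UNIV. \<alpha> (Suc (r m)) $ i $ j) = (\<lambda>m. 1)"
        using aF unfolding Fset_def by auto
      ultimately show ?thesis using LIMSEQ_unique tendsto_const by metis
    qed
    moreover have "0 \<le> zh $ i $ j" for i j
    proof (rule LIMSEQ_le_const)
      show "(\<lambda>m. \<alpha> (Suc (r m)) $ i $ j) \<longlonglongrightarrow> zh $ i $ j" by (intro tendsto_intros ar)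
      show "\<exists>N. \<forall>n\<ge>N. 0 \<le> \<alpha> (Suc (r n)) $ i $ j" using aF unfolding Fset_def by auto
    qed
    ultimately show ?thesis unfolding Fset_def by blast
  qed
  have kh: "KKT W zh (\<rho> *\<^sub>R uh)"
  proof -
    have K1: "(\<rho> *\<^sub>R uh - W) \<bullet> (a - zh) \<ge> 0" if "a \<in> Fset" for a
    proof -
      have "(\<lambda>m. (- W + \<rho> *\<^sub>R (u (Suc (r m)) + (z (Suc (r m)) - z (r m)))) \<bullet> (a - \<alpha> (Suc (r m))))
          \<longlonglongrightarrow> (- W + \<rho> *\<^sub>R (uh + 0)) \<bullet> (a - zh)"
        by (intro tendsto_intros ur l2r ar)
      moreover have "(- W + \<rho> *\<^sub>R (u (Suc (r m)) + (z (Suc (r m)) - z (r m)))) \<bullet> (a - \<alpha> (Suc (r m))) \<ge> 0" for m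
      proof -
        have e: "u (Suc (r m)) + (z (Suc (r m)) - z (r m)) = \<alpha> (Suc (r m)) - z (r m) + u (r m)"
          unfolding u_step by (simp add: algebra_simps)
        show ?thesis unfolding e by (rule aVI[OF that])
      qed
      ultimately have "0 \<le> (- W + \<rho> *\<^sub>R (uh + 0)) \<bullet> (a - zh)"
        by (intro LIMSEQ_le_const) auto
      then show ?thesis by simp
    qed
    have K2: "(\<rho> *\<^sub>R uh) \<bullet> (b - zh) \<le> 0" if "b \<in> Aset" for b
    proof -
      have "(\<lambda>m. ((z (Suc (r m)) - z (r m)) - \<tau> *\<^sub>R (u (Suc (r m)) + (z (Suc (r m)) - z (r m)))) \<bullet> (b - z (Suc (r m))))
          \<longlonglongrightarrow> (0 - \<tau> *\<^sub>R (uh + 0)) \<bullet> (b - zh)"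
        by (intro tendsto_intros ur l2r zr)
      moreover have "((z (Suc (r m)) - z (r m)) - \<tau> *\<^sub>R (u (Suc (r m)) + (z (Suc (r m)) - z (r m)))) \<bullet> (b - z (Suc (r m))) \<ge> 0" for m
      proof -
        have "(z (Suc (r m)) - z (r m)) - \<tau> *\<^sub>R (u (Suc (r m)) + (z (Suc (r m)) - z (r m)))
            = z (Suc (r m)) - (z (r m) + \<tau> *\<^sub>R (\<alpha> (Suc (r m)) - z (r m) + u (r m)))"
          unfolding u_step by (simp add: algebra_simps)
        then show ?thesis using zVI[OF that, of "r m"] by (simp only:)
      qed
      ultimately have "0 \<le> (0 - \<tau> *\<^sub>R (uh + 0)) \<bullet> (b - zh)"
        by (intro LIMSEQ_le_const) auto
      then have "\<tau> * (uh \<bullet> (b - zh)) \<le> 0" by simp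
      then have "uh \<bullet> (b - zh) \<le> 0" using tau by (simp add: mult_le_0_iff)
      then show ?thesis using rho by (simp add: mult_le_0_iff)
    qed
    show ?thesis unfolding KKT_def using zhF zhA K1 K2 by blast
  qed
  define \<Psi> where "\<Psi> = \<Phi> zh (\<rho> *\<^sub>R uh)"
  have decP: "decseq \<Psi>" unfolding \<Psi>_def using dec[OF kh] by (simp add: decseq_SucI)
  obtain L where L: "\<Psi> \<longlonglongrightarrow> L" using decseq_convergent[OF decP, of 0] Phi0 \<Psi>_def by metis
  have sm: "strict_mono (\<lambda>m. Suc (r m))" using r by (simp add: strict_mono_def)
  have "(\<lambda>m. \<Psi> (Suc (r m))) \<longlonglongrightarrow> (norm (uh - uh))\<^sup>2 / 2 + (norm (zh - zh))\<^sup>2 / (2*\<tau>)"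
  proof -
    have e: "(1/\<rho>) *\<^sub>R (\<rho> *\<^sub>R uh) = uh" using rho by simp
    show ?thesis unfolding \<Psi>_def \<Phi>_def e using tau by (intro tendsto_intros ur zr) auto
  qed
  then have "(\<lambda>m. \<Psi> (Suc (r m))) \<longlonglongrightarrow> 0" by simp
  moreover have "(\<lambda>m. \<Psi> (Suc (r m))) \<longlonglongrightarrow> L" using LIMSEQ_subseq_LIMSEQ[OF L sm] by (simp add: comp_def)
  ultimately have L0: "L = 0" using LIMSEQ_unique by blast
  have "(\<lambda>k. z k - zh) \<longlonglongrightarrow> 0"
  proof (rule sqlim[of "2*\<tau>" _ \<Psi>])
    show "0 \<le> 2*\<tau>" using tau by simp
    show "(norm (z k - zh))\<^sup>2 \<le> 2*\<tau> * \<Psi> k" for k unfolding \<Psi>_def \<Phi>_def using tau by (simp add: field_simps)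
    show "\<Psi> \<longlonglongrightarrow> 0" using L L0 by simp
  qed
  then have zlim: "z \<longlonglongrightarrow> zh" by (simp add: Lim_null[symmetric])
  have opt: "fobj W zh + gobj zh \<le> fobj W a + gobj a" for a
  proof (cases "a \<in> Fset \<and> a \<in> Aset")
    case True
    have "(\<rho> *\<^sub>R uh - W) \<bullet> (a - zh) \<ge> 0" "(\<rho> *\<^sub>R uh) \<bullet> (a - zh) \<le> 0"
      using kh True unfolding KKT_def by auto
    then have "- (W \<bullet> zh) \<le> - (W \<bullet> a)" by (simp add: inner_simps)
    then show ?thesis using True zhF zhA by (simp add: fobj_F gobj_A)
  next
    case False
    have nf: "fobj W a \<noteq> - \<infinity>" by (cases "a \<in> Fset") (simp_all add: fobj_F fobj_notF)
    have ng: "gobj a \<noteq> - \<infinity>" by (cases "a \<in> Aset") (simp_all add: gobj_A gobj_notA)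
    have "fobj W a = \<infinity> \<or> gobj a = \<infinity>" using False fobj_notF gobj_notA by blast
    then have inf: "fobj W a + gobj a = \<infinity>" using nf ng by auto
    show ?thesis unfolding inf by (rule ereal_less_eq(1))
  qed
  show ?thesis using zlim opt l4 by blast
qed

end
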